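(* Let $G$ be a finite group and $A,B$ subgroups of $G$ with $G=AB$. (a) If $\gamma$ is a gamma function on $G$ with $B\le\ker(\gamma)$, then $\gamma(ab)=\gamma(a)$ for all $a\in A$, $b\in B$, so $\gamma(G)=\gamma(A)$. If moreover $A$ is $\gamma(A)$-invariant, then the restriction $\gamma'=\gamma|_A:A\to\mathrm{Aut}(G)$ is a relative gamma function on $A$, and $\ker(\gamma)$ is invariant under the subgroup $\{\gamma'(a)\iota(a):a\in A\}$ of $\mathrm{Aut}(G)$. (b) Conversely, let $\gamma':A\to\mathrm{Aut}(G)$ be a relative gamma function such that $\gamma'(x)=1$ for all $x\in A\cap B$ and $B$ is invariant under $\{\gamma'(a)\iota(a):a\in A\}$. Then $\gamma(ab)=\gamma'(a)$ ($a\in A$, $b\in B$) is a well-defined gamma function on $G$, and $\ker(\gamma)=\ker(\gamma')B$.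
   Context: Maps act on the right, written exponentially. $\iota(g)\in\mathrm{Aut}(G)$ is $x\mapsto g^{-1}xg$. For $A\le G$, a function $\gamma:A\to\mathrm{Aut}(G)$ is a relative gamma function (RGF) on $A$ if $\gamma(g^{\gamma(h)}h)=\gamma(g)\gamma(h)$ for all $g,h\in A$ and $A$ is $\gamma(A)$-invariant (i.e. $a^{\gamma(b)}\in A$ for all $a,b\in A$). A gamma function on $G$ is an RGF with $A=G$. $\ker(\gamma)=\{g:\gamma(g)=1\}$. *)

theory Defs
  imports "HOL-Algebra.Algebra"
begin

text \<open>Automorphisms are the elements of auto G (extensional on carrier G).
  Maps act on the right: x^(f g) = (x^f)^g, i.e. first f, then g.\<close>

definition aut_id :: "('a, 'b) monoid_scheme \<Rightarrow> 'a \<Rightarrow> 'a" where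
  "aut_id G = (\<lambda>x\<in>carrier G. x)"

definition aut_mult :: "('a, 'b) monoid_scheme \<Rightarrow> ('a \<Rightarrow> 'a) \<Rightarrow> ('a \<Rightarrow> 'a) \<Rightarrow> 'a \<Rightarrow> 'a" where
  "aut_mult G f g = (\<lambda>x\<in>carrier G. g (f x))"

definition iota :: "('a, 'b) monoid_scheme \<Rightarrow> 'a \<Rightarrow> 'a \<Rightarrow> 'a" where
  "iota G g = (\<lambda>x\<in>carrier G. inv\<^bsub>G\<^esub> g \<otimes>\<^bsub>G\<^esub> x \<otimes>\<^bsub>G\<^esub> g)"

definition rel_gamma :: "('a, 'b) monoid_scheme \<Rightarrow> 'a set \<Rightarrow> ('a \<Rightarrow> 'a \<Rightarrow> 'a) \<Rightarrow> bool" where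
  "rel_gamma G A \<gamma> \<longleftrightarrow> subgroup A G
     \<and> (\<forall>a\<in>A. \<gamma> a \<in> auto G)
     \<and> (\<forall>a\<in>A. \<forall>b\<in>A. \<gamma> b a \<in> A)
     \<and> (\<forall>g\<in>A. \<forall>h\<in>A. \<gamma> (\<gamma> h g \<otimes>\<^bsub>G\<^esub> h) = aut_mult G (\<gamma> g) (\<gamma> h))"

definition gamma_fun :: "('a, 'b) monoid_scheme \<Rightarrow> ('a \<Rightarrow> 'a \<Rightarrow> 'a) \<Rightarrow> bool" where
  "gamma_fun G \<gamma> \<longleftrightarrow> rel_gamma G (carrier G) \<gamma>"

definition gker :: "('a, 'b) monoid_scheme \<Rightarrow> 'a set \<Rightarrow> ('a \<Rightarrow> 'a \<Rightarrow> 'a) \<Rightarrow> 'a set" where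
  "gker G A \<gamma> = {g\<in>A. \<gamma> g = aut_id G}"

end

theory Submission
  imports Defs
begin


lemma autoD:
  assumes "group G" "f \<in> auto G"
  shows "\<And>x. x \<in> carrier G \<Longrightarrow> f x \<in> carrier G"
    and "\<And>x y. x \<in> carrier G \<Longrightarrow> y \<in> carrier G \<Longrightarrow> f (x \<otimes>\<^bsub>G\<^esub> y) = f x \<otimes>\<^bsub>G\<^esub> f y"
    and "\<And>x. x \<notin> carrier G \<Longrightarrow> f x = undefined"
    and "bij_betw f (carrier G) (carrier G)"
  using assms by (auto simp: auto_def hom_def Bij_def extensional_def)

lemma aut_mult_id_right:
  assumes "group G" "f \<in> auto G"
  shows "aut_mult G f (aut_id G) = f"
  using autoD[OF assms] by (auto simp: aut_mult_def aut_id_def fun_eq_iff)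

lemma aut_mult_id_left:
  assumes "group G" "f \<in> auto G"
  shows "aut_mult G (aut_id G) f = f"
  using autoD[OF assms] by (auto simp: aut_mult_def aut_id_def fun_eq_iff)

lemma aut_idem:
  assumes "group G" "f \<in> auto G" "aut_mult G f f = f"
  shows "f = aut_id G"
proof
  fix x show "f x = aut_id G x"
  proof (cases "x \<in> carrier G")
    case True
    have "f (f x) = f x" using assms(3) True by (metis aut_mult_def restrict_apply')
    then have "f x = x" using autoD(1,4)[OF assms(1,2)] True
      by (metis bij_betw_def inj_onD)
    then show ?thesis using True by (simp add: aut_id_def)
  qed (use autoD(3)[OF assms(1,2)] in \<open>simp add: aut_id_def\<close>)
qed

lemma aut_one:
  assumes "group G" "f \<in> auto G"
  shows "f \<one>\<^bsub>G\<^esub> = \<one>\<^bsub>G\<^esub>"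
  using assms by (simp add: auto_def hom_one group.is_monoid)

lemma gammaD:
  assumes "gamma_fun G \<gamma>"
  shows "\<And>g. g \<in> carrier G \<Longrightarrow> \<gamma> g \<in> auto G"
    and "\<And>g h. g \<in> carrier G \<Longrightarrow> h \<in> carrier G \<Longrightarrow> \<gamma> (\<gamma> h g \<otimes>\<^bsub>G\<^esub> h) = aut_mult G (\<gamma> g) (\<gamma> h)"
  using assms by (auto simp: gamma_fun_def rel_gamma_def)

lemma gamma_ker_mult:
  assumes "group G" "gamma_fun G \<gamma>" "g \<in> carrier G" "b \<in> carrier G" "\<gamma> b = aut_id G"
  shows "\<gamma> (g \<otimes>\<^bsub>G\<^esub> b) = \<gamma> g"
proof -
  have "\<gamma> (\<gamma> b g \<otimes>\<^bsub>G\<^esub> b) = aut_mult G (\<gamma> g) (\<gamma> b)" using gammaD(2)[OF assms(2)] assms by blast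
  moreover have "\<gamma> b g = g" using assms by (simp add: aut_id_def)
  ultimately show ?thesis using assms aut_mult_id_right gammaD(1)[OF assms(2)] by metis
qed

lemma gamma_one:
  assumes "group G" "gamma_fun G \<gamma>"
  shows "\<gamma> \<one>\<^bsub>G\<^esub> = aut_id G"
proof -
  have c: "\<one>\<^bsub>G\<^esub> \<in> carrier G" using assms by (simp add: group.is_monoid monoid.one_closed)
  have a: "\<gamma> \<one>\<^bsub>G\<^esub> \<in> auto G" using gammaD(1)[OF assms(2) c] .
  have "\<gamma> (\<gamma> \<one>\<^bsub>G\<^esub> \<one>\<^bsub>G\<^esub> \<otimes>\<^bsub>G\<^esub> \<one>\<^bsub>G\<^esub>) = aut_mult G (\<gamma> \<one>\<^bsub>G\<^esub>) (\<gamma> \<one>\<^bsub>G\<^esub>)"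
    using gammaD(2)[OF assms(2) c c] .
  then have "aut_mult G (\<gamma> \<one>\<^bsub>G\<^esub>) (\<gamma> \<one>\<^bsub>G\<^esub>) = \<gamma> \<one>\<^bsub>G\<^esub>"
    using aut_one[OF assms(1) a] c assms(1) by (simp add: group.is_monoid monoid.l_one)
  then show ?thesis using aut_idem[OF assms(1) a] by simp
qed

lemma gamma_ker_inv:
  fixes G (structure)
  assumes G: "group G" and g: "gamma_fun G \<gamma>" and a: "a \<in> carrier G"
    and k: "k \<in> carrier G" "\<gamma> k = aut_id G"
  shows "\<gamma> (aut_mult G (\<gamma> a) (iota G a) k) = aut_id G"
proof -
  interpret group G by (rule G)
  have ga: "\<gamma> a \<in> auto G" using gammaD(1)[OF g a] .
  note A = autoD[OF G ga]
  obtain x where x: "x \<in> carrier G" "\<gamma> a x = inv a"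
    using A(4) a by (metis bij_betw_iff_bijections inv_closed)
  have gx: "\<gamma> x \<in> auto G" using gammaD(1)[OF g x(1)] .
  have "\<gamma> (\<gamma> a x \<otimes> a) = aut_mult G (\<gamma> x) (\<gamma> a)" using gammaD(2)[OF g x(1) a] .
  then have xa: "aut_mult G (\<gamma> x) (\<gamma> a) = aut_id G"
    using x a gamma_one[OF G g] by simp
  define ka where "ka = \<gamma> a k \<otimes> a"
  have kac: "ka \<in> carrier G" using ka_def A(1) k a by simp
  have gka: "\<gamma> ka = \<gamma> a"
    using gammaD(2)[OF g k(1) a] k(2) aut_mult_id_left[OF G ga] ka_def by simp
  have "\<gamma> (\<gamma> ka x \<otimes> ka) = aut_mult G (\<gamma> x) (\<gamma> ka)" using gammaD(2)[OF g x(1) kac] .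
  then have e: "\<gamma> (inv a \<otimes> ka) = aut_id G" using gka x xa by simp
  have "aut_mult G (\<gamma> a) (iota G a) k = inv a \<otimes> ka"
    using k a A(1) by (simp add: aut_mult_def iota_def ka_def m_assoc)
  then show ?thesis using e by simp
qed

lemma partA:
  fixes G (structure)
  assumes G: "group G" and sA: "subgroup A G" and sB: "subgroup B G"
    and AB: "carrier G = A <#> B"
    and g: "gamma_fun G \<gamma>" and Bk: "B \<subseteq> gker G (carrier G) \<gamma>"
  shows "(\<forall>a\<in>A. \<forall>b\<in>B. \<gamma> (a \<otimes> b) = \<gamma> a)
     \<and> \<gamma> ` carrier G = \<gamma> ` A
     \<and> ((\<forall>a\<in>A. \<forall>b\<in>A. \<gamma> b a \<in> A) \<longrightarrow>
          rel_gamma G A \<gamma>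
        \<and> (\<forall>a\<in>A. \<forall>k\<in>gker G (carrier G) \<gamma>.
              aut_mult G (\<gamma> a) (iota G a) k \<in> gker G (carrier G) \<gamma>))"
proof -
  interpret group G by (rule G)
  have Ac: "A \<subseteq> carrier G" using sA subgroup.subset by blast
  have Bc: "B \<subseteq> carrier G" using sB subgroup.subset by blast
  have 1: "\<forall>a\<in>A. \<forall>b\<in>B. \<gamma> (a \<otimes> b) = \<gamma> a"
  proof (intro ballI)
    fix a b assume "a \<in> A" "b \<in> B"
    then show "\<gamma> (a \<otimes> b) = \<gamma> a" using gamma_ker_mult[OF G g] Ac Bk by (auto simp: gker_def)
  qed
  have 2: "\<gamma> ` carrier G = \<gamma> ` A"
  proof
    show "\<gamma> ` carrier G \<subseteq> \<gamma> ` A"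
    proof
      fix y assume "y \<in> \<gamma> ` carrier G"
      then obtain c where c: "c \<in> carrier G" "y = \<gamma> c" by blast
      then obtain a b where "a \<in> A" "b \<in> B" "c = a \<otimes> b" using AB unfolding set_mult_def by blast
      then show "y \<in> \<gamma> ` A" using 1 c by auto
    qed
  qed (use Ac in auto)
  have 3: "rel_gamma G A \<gamma> \<and> (\<forall>a\<in>A. \<forall>k\<in>gker G (carrier G) \<gamma>.
              aut_mult G (\<gamma> a) (iota G a) k \<in> gker G (carrier G) \<gamma>)"
    if inv: "\<forall>a\<in>A. \<forall>b\<in>A. \<gamma> b a \<in> A"
  proof
    show "rel_gamma G A \<gamma>" unfolding rel_gamma_def
      using sA inv gammaD[OF g] Ac by blast
    show "\<forall>a\<in>A. \<forall>k\<in>gker G (carrier G) \<gamma>.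
              aut_mult G (\<gamma> a) (iota G a) k \<in> gker G (carrier G) \<gamma>"
    proof (intro ballI)
      fix a k assume a: "a \<in> A" and k: "k \<in> gker G (carrier G) \<gamma>"
      have ac: "a \<in> carrier G" using a Ac by blast
      have kc: "k \<in> carrier G" "\<gamma> k = aut_id G" using k by (auto simp: gker_def)
      have gk: "\<gamma> a k \<in> carrier G" using autoD(1)[OF G gammaD(1)[OF g ac]] kc by blast
      have "aut_mult G (\<gamma> a) (iota G a) k = inv a \<otimes> \<gamma> a k \<otimes> a"
        using kc gk by (simp add: aut_mult_def iota_def)
      with gk have "aut_mult G (\<gamma> a) (iota G a) k \<in> carrier G" using ac by simp
      then show "aut_mult G (\<gamma> a) (iota G a) k \<in> gker G (carrier G) \<gamma>"
        using gamma_ker_inv[OF G g ac kc] by (simp add: gker_def)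
    qed
  qed
  show ?thesis using 1 2 3 by blast
qed

lemma partB:
  fixes G (structure)
  assumes G: "group G" and sA: "subgroup A G" and sB: "subgroup B G"
    and AB: "carrier G = A <#> B"
    and rg: "rel_gamma G A \<gamma>'" and triv: "\<forall>x\<in>A \<inter> B. \<gamma>' x = aut_id G"
    and Binv: "\<forall>a\<in>A. \<forall>b\<in>B. aut_mult G (\<gamma>' a) (iota G a) b \<in> B"
  shows "\<exists>\<gamma>. gamma_fun G \<gamma>
          \<and> (\<forall>a\<in>A. \<forall>b\<in>B. \<gamma> (a \<otimes> b) = \<gamma>' a)
          \<and> gker G (carrier G) \<gamma> = gker G A \<gamma>' <#> B"
proof -
  interpret group G by (rule G)
  have Ac: "A \<subseteq> carrier G" using sA subgroup.subset by blast
  have Bc: "B \<subseteq> carrier G" using sB subgroup.subset by blast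
  have gaut: "\<And>a. a \<in> A \<Longrightarrow> \<gamma>' a \<in> auto G" using rg by (simp add: rel_gamma_def)
  have ginv: "\<And>a b. a \<in> A \<Longrightarrow> b \<in> A \<Longrightarrow> \<gamma>' b a \<in> A" using rg by (simp add: rel_gamma_def)
  have geq: "\<And>g h. g \<in> A \<Longrightarrow> h \<in> A \<Longrightarrow> \<gamma>' (\<gamma>' h g \<otimes> h) = aut_mult G (\<gamma>' g) (\<gamma>' h)"
    using rg by (simp add: rel_gamma_def)
  define dec where "dec g = (SOME a. a \<in> A \<and> (\<exists>b\<in>B. g = a \<otimes> b))" for g
  define \<gamma> where "\<gamma> g = \<gamma>' (dec g)" for g
  have wd: "\<gamma> (a \<otimes> b) = \<gamma>' a" if a: "a \<in> A" and b: "b \<in> B" for a b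
  proof -
    have "\<exists>a'. a' \<in> A \<and> (\<exists>c\<in>B. a \<otimes> b = a' \<otimes> c)" using a b by blast
    then have "dec (a \<otimes> b) \<in> A \<and> (\<exists>b'\<in>B. a \<otimes> b = dec (a \<otimes> b) \<otimes> b')"
      unfolding dec_def by (rule someI_ex[where P="\<lambda>a'. a' \<in> A \<and> (\<exists>c\<in>B. a \<otimes> b = a' \<otimes> c)"])
    then obtain a' b' where a': "a' \<in> A" "dec (a \<otimes> b) = a'" and b': "b' \<in> B" and e: "a \<otimes> b = a' \<otimes> b'"
      by blast
    have ac: "a \<in> carrier G" "a' \<in> carrier G" "b \<in> carrier G" "b' \<in> carrier G" using a a' b b' Ac Bc by auto
    define x where "x = inv a' \<otimes> a"
    have xA: "x \<in> A" using x_def a a' sA by (simp add: subgroup.m_closed subgroup.m_inv_closed)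
    have "x = b' \<otimes> inv b"
    proof -
      have "x \<otimes> b = inv a' \<otimes> (a \<otimes> b)" using ac unfolding x_def by (simp add: m_assoc)
      also have "\<dots> = inv a' \<otimes> (a' \<otimes> b')" using e by simp
      also have "\<dots> = b'" using ac by (simp add: m_assoc[symmetric])
      finally have "x \<otimes> b = b'" .
      then have "x \<otimes> b \<otimes> inv b = b' \<otimes> inv b" by simp
      then show ?thesis using ac unfolding x_def by (simp add: m_assoc)
    qed
    then have xB: "x \<in> B" using b b' sB by (simp add: subgroup.m_closed subgroup.m_inv_closed)
    have gx: "\<gamma>' x = aut_id G" using triv xA xB by blast
    have xc: "x \<in> carrier G" using xA Ac by blast
    have "\<gamma>' (\<gamma>' x a' \<otimes> x) = aut_mult G (\<gamma>' a') (\<gamma>' x)" using geq a' xA by blast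
    moreover have "\<gamma>' x a' = a'" using gx ac by (simp add: aut_id_def)
    moreover have "a' \<otimes> x = a" using ac unfolding x_def by (simp add: m_assoc[symmetric])
    ultimately have "\<gamma>' a = \<gamma>' a'" using gx aut_mult_id_right[OF G gaut[OF a'(1)]] by simp
    then show ?thesis using a' unfolding \<gamma>_def by simp
  qed
  have decomp: "\<exists>a b. a \<in> A \<and> b \<in> B \<and> g = a \<otimes> b" if "g \<in> carrier G" for g
    using that AB unfolding set_mult_def by blast
  have gfun: "gamma_fun G \<gamma>"
    unfolding gamma_fun_def rel_gamma_def
  proof (intro conjI ballI)
    show "subgroup (carrier G) G" by (rule subgroup_self)
    fix g assume "g \<in> carrier G"
    then obtain a b where ab: "a \<in> A" "b \<in> B" "g = a \<otimes> b" using decomp by blast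
    then show gA: "\<gamma> g \<in> auto G" using wd gaut by simp
    fix h assume "h \<in> carrier G"
    then obtain a2 b2 where ab2: "a2 \<in> A" "b2 \<in> B" "h = a2 \<otimes> b2" using decomp by blast
    have g2: "\<gamma> h = \<gamma>' a2" using ab2 wd by simp
    have gh: "\<gamma> g = \<gamma>' a" using ab wd by simp
    have ac: "a \<in> carrier G" "b \<in> carrier G" "a2 \<in> carrier G" "b2 \<in> carrier G" using ab ab2 Ac Bc by auto
    note A2 = autoD[OF G gaut[OF ab2(1)]]
    show "\<gamma> g h \<in> carrier G" using autoD(1)[OF G gA] \<open>h \<in> carrier G\<close> by blast
    define a3 where "a3 = \<gamma>' a2 a \<otimes> a2"
    define b3 where "b3 = aut_mult G (\<gamma>' a2) (iota G a2) b \<otimes> b2"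
    have a3A: "a3 \<in> A" unfolding a3_def using ginv ab ab2 sA by (simp add: subgroup.m_closed)
    have b3B: "b3 \<in> B" unfolding b3_def using Binv ab ab2 sB by (simp add: subgroup.m_closed)
    have c1: "\<gamma>' a2 a \<in> carrier G" "\<gamma>' a2 b \<in> carrier G" using A2(1) ac by auto
    have "\<gamma> h g \<otimes> h = \<gamma>' a2 a \<otimes> \<gamma>' a2 b \<otimes> (a2 \<otimes> b2)"
      using g2 ab ab2 A2(2) ac by simp
    also have "\<dots> = a3 \<otimes> b3"
      unfolding a3_def b3_def using ac c1 by (simp add: aut_mult_def iota_def m_assoc r_inv_ex m_assoc[symmetric, of a2 "inv a2"])
    finally have "\<gamma> (\<gamma> h g \<otimes> h) = \<gamma>' a3" using wd a3A b3B by simp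
    also have "\<dots> = aut_mult G (\<gamma>' a) (\<gamma>' a2)" unfolding a3_def using geq ab ab2 by simp
    finally show "\<gamma> (\<gamma> h g \<otimes> h) = aut_mult G (\<gamma> g) (\<gamma> h)" using g2 gh by simp
  qed
  have ker: "gker G (carrier G) \<gamma> = gker G A \<gamma>' <#> B"
  proof
    show "gker G (carrier G) \<gamma> \<subseteq> gker G A \<gamma>' <#> B"
    proof
      fix g assume "g \<in> gker G (carrier G) \<gamma>"
      then have g: "g \<in> carrier G" "\<gamma> g = aut_id G" by (auto simp: gker_def)
      then obtain a b where ab: "a \<in> A" "b \<in> B" "g = a \<otimes> b" using decomp by blast
      then have "a \<in> gker G A \<gamma>'" using g wd by (simp add: gker_def)
      then show "g \<in> gker G A \<gamma>' <#> B" using ab unfolding set_mult_def by blast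
    qed
    show "gker G A \<gamma>' <#> B \<subseteq> gker G (carrier G) \<gamma>"
    proof
      fix g assume "g \<in> gker G A \<gamma>' <#> B"
      then obtain k b where k: "k \<in> A" "\<gamma>' k = aut_id G" and b: "b \<in> B" and e: "g = k \<otimes> b"
        unfolding set_mult_def gker_def by blast
      have "g \<in> carrier G" using k b e Ac Bc by auto
      then show "g \<in> gker G (carrier G) \<gamma>" using wd k b e by (simp add: gker_def)
    qed
  qed
  show ?thesis using gfun wd ker by blast
qed



theorem mainTheorem8:
  fixes G (structure) and A B :: "'a set"
    and \<gamma> \<gamma>' :: "'a \<Rightarrow> 'a \<Rightarrow> 'a"
  assumes "group G" and "finite (carrier G)"
    and "subgroup A G" and "subgroup B G"
    and "carrier G = A <#> B"
  shows
   "(gamma_fun G \<gamma> \<and> B \<subseteq> gker G (carrier G) \<gamma> \<longrightarrow>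
       (\<forall>a\<in>A. \<forall>b\<in>B. \<gamma> (a \<otimes> b) = \<gamma> a)
     \<and> \<gamma> ` carrier G = \<gamma> ` A
     \<and> ((\<forall>a\<in>A. \<forall>b\<in>A. \<gamma> b a \<in> A) \<longrightarrow>
          rel_gamma G A \<gamma>
        \<and> (\<forall>a\<in>A. \<forall>k\<in>gker G (carrier G) \<gamma>.
              aut_mult G (\<gamma> a) (iota G a) k \<in> gker G (carrier G) \<gamma>)))
  \<and> (rel_gamma G A \<gamma>' \<and> (\<forall>x\<in>A \<inter> B. \<gamma>' x = aut_id G)
      \<and> (\<forall>a\<in>A. \<forall>b\<in>B. aut_mult G (\<gamma>' a) (iota G a) b \<in> B) \<longrightarrow>
      (\<exists>\<gamma>. gamma_fun G \<gamma>
          \<and> (\<forall>a\<in>A. \<forall>b\<in>B. \<gamma> (a \<otimes> b) = \<gamma>' a)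
          \<and> gker G (carrier G) \<gamma> = gker G A \<gamma>' <#> B))"
  using partA[OF assms(1,3,4,5), of \<gamma>] partB[OF assms(1,3,4,5), of \<gamma>'] by blast

end
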